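(* Let $P\in N_1$ be a sum of $4$ monomials, not necessarily distinct (i.e. $P(1)=4$). Then $P$ has unique factorisation inside $N_1$: any two factorisations of $P$ into irreducible elements of $N_1$ coincide up to the order of the factors.
   Context: $N_1=\mathbb{Z}_{\ge0}[X]$ is the semiring of univariate polynomials with nonnegative integer coefficients. An element $Q\neq0,1$ of $N_1$ is irreducible if in every factorisation $Q=ST$ with $S,T\in N_1$ one of $S,T$ is $1$. *)

theory Defs
  imports "HOL-Computational_Algebra.Polynomial" "HOL-Library.Multiset"
begin

text \<open>N_1 = Z_{\<ge>0}[X] is modelled by the type nat poly.
 Irreducibility exactly as in the paper: Q \<noteq> 0, Q \<noteq> 1, and in every
 factorisation Q = S T inside N_1 one of S, T is 1.\<close>

definition irreducible_N1 :: "nat poly \<Rightarrow> bool" where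
  "irreducible_N1 Q \<longleftrightarrow> Q \<noteq> 0 \<and> Q \<noteq> 1 \<and> (\<forall>S T. Q = S * T \<longrightarrow> S = 1 \<or> T = 1)"

end

theory Submission
  imports Defs
begin

lemma val0: "poly (p::nat poly) 1 = 0 \<Longrightarrow> p = 0"
  by (induct p rule: pCons_induct) auto

lemma val1: "poly (p::nat poly) 1 = 1 \<Longrightarrow> \<exists>k. p = monom 1 k"
proof (induct p rule: pCons_induct)
  case 0 then show ?case by simp
next
  case (pCons a q)
  then have h: "a + poly q 1 = 1" by simp
  show ?case
  proof (cases "a = 0")
    case True
    then obtain k where "q = monom 1 k" using pCons h by auto
    then show ?thesis using True by (metis monom_Suc)
  next
    case False
    then have "a = 1" "q = 0" using h val0 by auto
    then show ?thesis by (metis monom_0 one_pCons pCons_0_0 one_poly_eq_simps(1))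
  qed
qed

lemma val1c: "poly (p::nat poly) 1 = 1 \<Longrightarrow> coeff p 0 \<noteq> 0 \<Longrightarrow> p = 1"
proof -
  assume a: "poly p 1 = 1" "coeff p 0 \<noteq> 0"
  obtain k where k: "p = monom 1 k" using val1 a by blast
  then have "k = 0" using a by (auto simp: coeff_monom split: if_splits)
  then show ?thesis using k by (simp add: monom_0 one_pCons)
qed

lemma val2: "poly (p::nat poly) 1 = 2 \<Longrightarrow> coeff p 0 \<noteq> 0 \<Longrightarrow> \<exists>n. p = 1 + monom 1 n"
proof -
  assume a: "poly p 1 = 2" "coeff p 0 \<noteq> 0"
  obtain c q where p: "p = pCons c q" by (cases p) 
  have h: "c + poly q 1 = 2" "c \<noteq> 0" using a p by auto
  show ?thesis
  proof (cases "c = 1")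
    case True
    then obtain k where "q = monom 1 k" using h val1 by auto
    then have "p = 1 + monom 1 (Suc k)" using p True
      by (simp add: monom_Suc one_pCons)
    then show ?thesis by blast
  next
    case False
    then have "c = 2" "q = 0" using h val0 by auto
    then have "p = 1 + monom 1 0" using p by (simp add: monom_0 one_pCons)
    then show ?thesis by blast
  qed
qed

lemma Xmult: "pCons 0 q = monom (1::nat) 1 * q"
  using smult_1_left[of q] by (simp add: monom_Suc monom_0)

lemma cancel:
  fixes R R' :: "nat poly"
  assumes "monom 1 m * R = monom 1 m' * R'" "coeff R 0 \<noteq> 0" "coeff R' 0 \<noteq> 0"
  shows "m = m' \<and> R = R'"
proof -
  have c: "\<And>k. coeff (monom 1 m * R) k = coeff (monom 1 m' * R') k" using assms(1) by simp
  have "m = m'"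
  proof (rule ccontr)
    assume "m \<noteq> m'"
    then consider "m < m'" | "m' < m" by linarith
    then show False
    proof cases
      case 1 then show ?thesis using c[of m] assms(2) by (simp add: coeff_monom_mult)
    next
      case 2 then show ?thesis using c[of m'] assms(3) by (simp add: coeff_monom_mult)
    qed
  qed
  moreover have "R = R'"
  proof (rule poly_eqI)
    fix k show "coeff R k = coeff R' k" using c[of "k + m"] \<open>m = m'\<close> by (simp add: coeff_monom_mult)
  qed
  ultimately show ?thesis by simp
qed

lemma irr_coeff0: "irreducible_N1 q \<Longrightarrow> coeff q 0 = 0 \<Longrightarrow> q = monom 1 1"
proof -
  assume a: "irreducible_N1 q" "coeff q 0 = 0"
  obtain c r where q: "q = pCons c r" by (cases q)
  then have "q = monom 1 1 * r" using a by (simp add: Xmult)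
  moreover have "monom (1::nat) 1 \<noteq> 1" by (metis monom_eq_iff' monom_0 one_pCons zero_neq_one)
  ultimately show ?thesis using a unfolding irreducible_N1_def by fastforce
qed

lemma X_irr: "irreducible_N1 (monom 1 1)"
  unfolding irreducible_N1_def
proof (intro conjI allI impI)
  show "monom (1::nat) 1 \<noteq> 0" by simp
  show "monom (1::nat) 1 \<noteq> 1" by (metis monom_eq_iff' monom_0 one_pCons zero_neq_one)
  fix S T :: "nat poly" assume e: "monom 1 1 = S * T"
  have "poly S 1 * poly T 1 = 1" using arg_cong[OF e, of "\<lambda>p. poly p 1"] by (simp add: poly_monom)
  then have "poly S 1 = 1" "poly T 1 = 1" by auto
  then obtain i j where "S = monom 1 i" "T = monom 1 j" using val1 by blast
  with e have "monom (1::nat) 1 = monom 1 (i+j)" "S = monom 1 i" "T = monom 1 j" by (auto simp: mult_monom)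
  then have "i = 0 \<or> j = 0" "S = monom 1 i" "T = monom 1 j" by (auto simp: monom_eq_iff')
  then show "S = 1 \<or> T = 1" by (auto simp: monom_0 one_pCons)
qed


lemma smult1: "smult (Suc 0) p = (p::nat poly)"
  using smult_1_left[of p] by simp

lemma expand: "(1 + monom (1::nat) a) * (1 + monom 1 b) = monom 1 0 + monom 1 a + monom 1 b + monom 1 (a+b)"
  by (simp add: algebra_simps mult_monom monom_0 one_pCons smult1)

lemma coeff_expand: "coeff ((1 + monom (1::nat) a) * (1 + monom 1 b)) n = count {#0,a,b,a+b#} n"
  unfolding expand by (simp add: coeff_monom)

lemma pair:
  assumes "(1 + monom (1::nat) a) * (1 + monom 1 b) = (1 + monom 1 c) * (1 + monom 1 d)"
  shows "{#a,b#} = {#c,d#}"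
proof -
  have "{#0,a,b,a+b#} = {#0,c,d,c+d#}"
    by (rule multiset_eqI) (metis coeff_expand assms)
  then have e: "{#a,b,a+b#} = {#c,d,c+d#}" by simp
  then have "sum_mset {#a,b,a+b#} = sum_mset {#c,d,c+d#}" by simp
  then have "a + b = c + d" by simp
  with e show ?thesis by (simp add: add_mset_commute)
qed

lemma irr2: "poly (S::nat poly) 1 = 2 \<Longrightarrow> coeff S 0 \<noteq> 0 \<Longrightarrow> irreducible_N1 S"
  unfolding irreducible_N1_def
proof (intro conjI allI impI)
  assume a: "poly S 1 = 2" "coeff S 0 \<noteq> 0"
  then show "S \<noteq> 0" "S \<noteq> 1" by auto
  fix U V assume e: "S = U * V"
  have v: "poly U 1 * poly V 1 = 2" using a e by simp
  have c: "coeff U 0 \<noteq> 0" "coeff V 0 \<noteq> 0" using a e by (auto simp: coeff_mult)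
  have "poly U 1 = 1 \<or> poly V 1 = 1"
  proof (rule ccontr)
    assume n: "\<not> ?thesis"
    have "poly U 1 \<noteq> 0" "poly V 1 \<noteq> 0" using v by (metis mult_zero_left mult_zero_right zero_neq_numeral)+
    then have "2 \<le> poly U 1" "2 \<le> poly V 1" using n by auto
    then have "2 * 2 \<le> poly U 1 * poly V 1" by (intro mult_le_mono)
    then show False using v by simp
  qed
  then show "U = 1 \<or> V = 1" using val1c c by blast
qed

lemma decomp: "(p::nat poly) \<noteq> 0 \<Longrightarrow> \<exists>m R. p = monom 1 m * R \<and> coeff R 0 \<noteq> 0"
proof (induct p rule: pCons_induct)
  case 0 then show ?case by simp
next
  case (pCons a q)
  show ?case
  proof (cases "a = 0")
    case True
    then have "q \<noteq> 0" using pCons by auto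
    then obtain m R where "q = monom 1 m * R" "coeff R 0 \<noteq> 0" using pCons by auto
    then have "pCons a q = monom 1 (Suc m) * R" "coeff R 0 \<noteq> 0" using True
      by (auto simp: Xmult mult.assoc[symmetric] mult_monom)
    then show ?thesis by blast
  next
    case False
    then have "pCons a q = monom 1 0 * pCons a q" by (simp add: monom_0 smult1)
    moreover have "coeff (pCons a q) 0 \<noteq> 0" using False by simp
    ultimately show ?thesis by blast
  qed
qed

lemma prod_ge: "\<forall>x\<in>#M. (2::nat) \<le> x \<Longrightarrow> 2 ^ size M \<le> prod_mset M"
  by (induct M) (auto intro: mult_mono)


lemma poly_pm: "poly (prod_mset A) y = prod_mset (image_mset (\<lambda>p. poly p y) A)"
  using poly_prod_mset[of "\<lambda>x. x" A y] by simp

lemma irr_ge2: "irreducible_N1 q \<Longrightarrow> coeff q 0 \<noteq> 0 \<Longrightarrow> 2 \<le> poly q 1"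
proof -
  assume a: "irreducible_N1 q" "coeff q 0 \<noteq> 0"
  then have "q \<noteq> 0" "q \<noteq> 1" unfolding irreducible_N1_def by auto
  then have "poly q 1 \<noteq> 0" "poly q 1 \<noteq> 1" using val0 val1c a(2) by blast+
  then show ?thesis by linarith
qed

lemma shape:
  assumes irr: "\<forall>q\<in>#A'. irreducible_N1 q \<and> coeff q 0 \<noteq> 0" and v: "poly (prod_mset A') 1 = 4"
  shows "(\<exists>r. A' = {#r#}) \<or> (\<exists>s t. A' = {#s,t#} \<and> poly s 1 = 2 \<and> poly t 1 = 2 \<and> coeff s 0 \<noteq> 0 \<and> coeff t 0 \<noteq> 0)"
proof -
  let ?V = "image_mset (\<lambda>p. poly p 1) A'"
  have ge: "\<forall>x\<in>#?V. 2 \<le> x" using irr irr_ge2 by auto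
  have pv: "prod_mset ?V = 4" using v by (simp add: poly_pm)
  have "2 ^ size A' \<le> (4::nat)" using prod_ge[OF ge] pv by simp
  moreover have "size A' < 3"
  proof (rule ccontr)
    assume "\<not> size A' < 3"
    then have "(2::nat)^3 \<le> 2^size A'" by (intro power_increasing) auto
    then show False using calculation by simp
  qed
  ultimately consider "size A' = 0" | "size A' = 1" | "size A' = 2" by linarith
  then show ?thesis
  proof cases
    case 1 then have "A' = {#}" by simp
    then show ?thesis using v by simp
  next
    case 2 then show ?thesis using size_1_singleton_mset by blast
  next
    case 3
    then obtain s N where "A' = add_mset s N" "size N = 1" using size_eq_Suc_imp_eq_union[of A' 1] by auto
    then obtain t where A: "A' = {#s,t#}" using size_1_singleton_mset by blast
    have st: "poly s 1 * poly t 1 = 4" "2 \<le> poly s 1" "2 \<le> poly t 1" using pv ge A by auto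
    have "poly s 1 = 2"
    proof (rule ccontr)
      assume "poly s 1 \<noteq> 2" then have "3 \<le> poly s 1" using st by linarith
      then have "3 * 2 \<le> poly s 1 * poly t 1" using st by (intro mult_le_mono)
      then show False using st by simp
    qed
    moreover then have "poly t 1 = 2" using st by simp
    ultimately show ?thesis using A irr by auto
  qed
qed


lemma factor:
  fixes A :: "nat poly multiset" and P :: "nat poly"
  assumes irr: "\<forall>q\<in>#A. irreducible_N1 q" and pr: "prod_mset A = P" and v: "poly P 1 = 4"
  shows "\<exists>A'. A = replicate_mset (count A (monom 1 1)) (monom 1 1) + A' \<and>
     P = monom 1 (count A (monom 1 1)) * prod_mset A' \<and> coeff (prod_mset A') 0 \<noteq> 0 \<and>
     (\<forall>q\<in>#A'. irreducible_N1 q \<and> coeff q 0 \<noteq> 0) \<and> poly (prod_mset A') 1 = 4"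
proof -
  define X :: "nat poly" where "X = monom 1 1"
  define A' where "A' = {#q \<in># A. q \<noteq> X#}"
  have A: "A = replicate_mset (count A X) X + A'"
    unfolding A'_def using multiset_partition[where M=A and P="\<lambda>q. q = X"] filter_eq_replicate_mset[where D=A and x=X] by simp
  have P: "P = monom 1 (count A X) * prod_mset A'"
  proof -
    have "P = prod_mset (replicate_mset (count A X) X + A')" using pr arg_cong[OF A, of prod_mset] by simp
    then show ?thesis by (simp add: X_def monom_power)
  qed
  have e: "\<forall>q\<in>#A'. irreducible_N1 q \<and> coeff q 0 \<noteq> 0"
    unfolding A'_def using irr irr_coeff0 X_def by auto
  have c: "coeff (prod_mset A') 0 \<noteq> 0"
    using e by (auto simp add: poly_0_coeff_0[symmetric] poly_pm prod_mset_zero_iff)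
  have "poly (prod_mset A') 1 = 4" using v P by (simp add: poly_monom)
  then show ?thesis using A P c e X_def by blast
qed

theorem mainTheorem8:
  fixes P :: "nat poly"
  assumes "poly P 1 = 4"
  shows "(\<exists>A :: nat poly multiset. (\<forall>q\<in>#A. irreducible_N1 q) \<and> prod_mset A = P) \<and>
         (\<forall>A B :: nat poly multiset.
            (\<forall>q\<in>#A. irreducible_N1 q) \<longrightarrow> (\<forall>q\<in>#B. irreducible_N1 q) \<longrightarrow>
            prod_mset A = P \<longrightarrow> prod_mset B = P \<longrightarrow> A = B)"
proof (intro conjI allI impI)
  have "P \<noteq> 0" using assms by auto
  then obtain m R where PR: "P = monom 1 m * R" "coeff R 0 \<noteq> 0" using decomp by blast
  have R4: "poly R 1 = 4" using assms PR by (simp add: poly_monom)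
  have Xs: "\<forall>q\<in>#replicate_mset m (monom 1 1). irreducible_N1 q" using X_irr by simp
  have pX: "prod_mset (replicate_mset m (monom 1 1)) = (monom 1 m :: nat poly)" by (simp add: monom_power)
  show "\<exists>A :: nat poly multiset. (\<forall>q\<in>#A. irreducible_N1 q) \<and> prod_mset A = P"
  proof (cases "irreducible_N1 R")
    case True
    then show ?thesis using Xs pX PR
      by (intro exI[of _ "replicate_mset m (monom 1 1) + {#R#}"]) (auto simp: mult.commute)
  next
    case False
    have "R \<noteq> 0" "R \<noteq> 1" using R4 by auto
    with False obtain S T where ST: "R = S * T" "S \<noteq> 1" "T \<noteq> 1" unfolding irreducible_N1_def by blast
    have c: "coeff S 0 \<noteq> 0" "coeff T 0 \<noteq> 0" using PR ST by (auto simp: coeff_mult)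
    have v: "poly S 1 * poly T 1 = 4" using R4 ST by simp
    have n1: "poly S 1 \<noteq> 1" "poly T 1 \<noteq> 1" using val1c c ST by blast+
    have n0: "poly S 1 \<noteq> 0" "poly T 1 \<noteq> 0" using v by (metis mult_zero_left mult_zero_right zero_neq_numeral)+
    have "poly S 1 = 2"
    proof (rule ccontr)
      assume "poly S 1 \<noteq> 2" then have "3 \<le> poly S 1" using n0 n1 by linarith
      then have "3 * 2 \<le> poly S 1 * poly T 1" using n0 n1 by (intro mult_le_mono) auto
      then show False using v by simp
    qed
    moreover then have "poly T 1 = 2" using v by simp
    ultimately have "irreducible_N1 S" "irreducible_N1 T" using irr2 c by auto
    then show ?thesis using Xs pX PR ST
      by (intro exI[of _ "replicate_mset m (monom 1 1) + {#S, T#}"]) (auto simp: ac_simps)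
  qed
next
  fix A B :: "nat poly multiset"
  assume a: "\<forall>q\<in>#A. irreducible_N1 q" "\<forall>q\<in>#B. irreducible_N1 q" "prod_mset A = P" "prod_mset B = P"
  obtain A' where A': "A = replicate_mset (count A (monom 1 1)) (monom 1 1) + A'"
     "P = monom 1 (count A (monom 1 1)) * prod_mset A'" "coeff (prod_mset A') 0 \<noteq> 0"
     "\<forall>q\<in>#A'. irreducible_N1 q \<and> coeff q 0 \<noteq> 0" "poly (prod_mset A') 1 = 4"
    using factor[OF a(1) a(3) assms] by blast
  obtain B' where B': "B = replicate_mset (count B (monom 1 1)) (monom 1 1) + B'"
     "P = monom 1 (count B (monom 1 1)) * prod_mset B'" "coeff (prod_mset B') 0 \<noteq> 0"
     "\<forall>q\<in>#B'. irreducible_N1 q \<and> coeff q 0 \<noteq> 0" "poly (prod_mset B') 1 = 4"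
    using factor[OF a(2) a(4) assms] by blast
  have cc: "count A (monom 1 1) = count B (monom 1 1)" "prod_mset A' = prod_mset B'"
    using cancel[of "count A (monom 1 1)" "prod_mset A'" "count B (monom 1 1)" "prod_mset B'"] A'(2,3) B'(2,3) by auto
  have irr1: "\<And>q. irreducible_N1 q \<Longrightarrow> q \<noteq> 1" unfolding irreducible_N1_def by auto
  have "A' = B'"
  proof -
    have sp: False if "X = {#r#}" "Y = {#s,t#}" "\<forall>q\<in>#X. irreducible_N1 q \<and> coeff q 0 \<noteq> 0"
      "\<forall>q\<in>#Y. irreducible_N1 q \<and> coeff q 0 \<noteq> 0" "prod_mset X = prod_mset Y" for X Y :: "nat poly multiset" and r s t :: "nat poly"
    proof -
      have rs: "r = s * t" "irreducible_N1 r" "irreducible_N1 s" "irreducible_N1 t" using that by auto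
      then have "s = 1 \<or> t = 1" unfolding irreducible_N1_def by blast
      then show False using irr1 rs by blast
    qed
    have pp: "X = Y" if h: "X = {#s1,t1#}" "Y = {#s2,t2#}" "poly s1 1 = 2" "poly t1 1 = 2" "poly s2 1 = 2" "poly t2 1 = 2"
      "coeff s1 0 \<noteq> 0" "coeff t1 0 \<noteq> 0" "coeff s2 0 \<noteq> 0" "coeff t2 0 \<noteq> 0" "prod_mset X = prod_mset Y" for X Y :: "nat poly multiset" and s1 t1 s2 t2 :: "nat poly"
    proof -
      obtain a where a: "s1 = 1 + monom 1 a" using val2 h(3,7) by blast
      obtain b where b: "t1 = 1 + monom 1 b" using val2 h(4,8) by blast
      obtain c where c: "s2 = 1 + monom 1 c" using val2 h(5,9) by blast
      obtain d where d: "t2 = 1 + monom 1 d" using val2 h(6,10) by blast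
      note abcd = a b c d
      have "{#a,b#} = {#c,d#}" using h abcd by (intro pair) simp
      then have "image_mset (\<lambda>n. 1 + monom 1 n) {#a,b#} = image_mset (\<lambda>n. 1 + monom 1 n) {#c,d#}" by simp
      then show ?thesis using h(1,2) abcd by (simp only: image_mset_add_mset image_mset_empty)
    qed
    from shape[OF A'(4,5)] show ?thesis
    proof (elim disjE exE conjE)
      fix r assume r: "A' = {#r#}"
      from shape[OF B'(4,5)] show ?thesis
      proof (elim disjE exE conjE)
        fix r' assume r': "B' = {#r'#}"
        then show ?thesis using r cc(2) by simp
      next
        fix s t assume "B' = {#s, t#}"
        then show ?thesis using sp[OF r _ A'(4) B'(4) cc(2)] by blast
      qed
    next
      fix s1 t1 assume st1: "A' = {#s1, t1#}" "poly s1 1 = 2" "poly t1 1 = 2" "coeff s1 0 \<noteq> 0" "coeff t1 0 \<noteq> 0"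
      from shape[OF B'(4,5)] show ?thesis
      proof (elim disjE exE conjE)
        fix r' assume r': "B' = {#r'#}"
        then show ?thesis using sp[OF r' st1(1) B'(4) A'(4) cc(2)[symmetric]] by blast
      next
        fix s t assume "B' = {#s, t#}" "poly s 1 = 2" "poly t 1 = 2" "coeff s 0 \<noteq> 0" "coeff t 0 \<noteq> 0"
        then show ?thesis using pp[OF st1(1) _ st1(2,3) _ _ st1(4,5) _ _ cc(2)] by blast
      qed
    qed
  qed
  then show "A = B" using A'(1) B'(1) cc(1) by metis
qed

end
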